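(* Let $n\ge2$, $C>0$, let $x\in\mathcal{K}_{S+}$ with $x_1\le\dots\le x_n$ and $x_n>x_1$, and let $\tilde{x}=x+\eta$ where either $\eta$ has i.i.d. Laplace entries with mean $0$ and scale $b>0$, or $\eta\sim\mathcal{N}(0,\sigma^2I_n)$ with $\sigma>0$. Then $$\alpha=\max_i\mathcal{B}(\pi_{S+})_i-\min_i\mathcal{B}(\pi_{S+})_i\ \ge\ \mathcal{B}((\pi_S)_+)_1-\mathcal{B}((\pi_S)_+)_n>0.$$
   Context: $\mathcal{K}_S=\{v\in\mathbb{R}^n:\sum_i v_i=C\}$, $\mathcal{K}_{S+}=\{v\in\mathcal{K}_S:v\ge0\}$; $\pi_S,\pi_{S+}$ are the Euclidean projections onto them. $(y)_+=\max\{y,0\}$ componentwise. $\mathcal{B}(\pi)=\mathbb{E}_{\tilde{x}}[\pi(\tilde{x})]-x$ for a map $\pi$, and $\mathcal{B}((\pi_S)_+)=\mathbb{E}[(\pi_S(\tilde{x}))_+]-x$. *)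

theory Defs
  imports "HOL-Probability.Probability"
begin

text \<open>Vectors in R^n are functions nat => real; only the coordinates 0..n-1 matter
  (paper index i corresponds to i-1 here).\<close>

definition KS :: "nat \<Rightarrow> real \<Rightarrow> (nat \<Rightarrow> real) set" where
  "KS n C = {v. (\<Sum>i<n. v i) = C}"

definition KSplus :: "nat \<Rightarrow> real \<Rightarrow> (nat \<Rightarrow> real) set" where
  "KSplus n C = {v \<in> KS n C. \<forall>i<n. 0 \<le> v i}"

definition sqdist :: "nat \<Rightarrow> (nat \<Rightarrow> real) \<Rightarrow> (nat \<Rightarrow> real) \<Rightarrow> real" where
  "sqdist n y z = (\<Sum>i<n. (y i - z i)^2)"

definition proj :: "nat \<Rightarrow> (nat \<Rightarrow> real) set \<Rightarrow> (nat \<Rightarrow> real) \<Rightarrow> (nat \<Rightarrow> real)" where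
  "proj n K y = (SOME z. z \<in> K \<and> (\<forall>w\<in>K. sqdist n y z \<le> sqdist n y w))"

definition piS :: "nat \<Rightarrow> real \<Rightarrow> (nat \<Rightarrow> real) \<Rightarrow> (nat \<Rightarrow> real)" where
  "piS n C = proj n (KS n C)"

definition piSplus :: "nat \<Rightarrow> real \<Rightarrow> (nat \<Rightarrow> real) \<Rightarrow> (nat \<Rightarrow> real)" where
  "piSplus n C = proj n (KSplus n C)"

definition pospart :: "((nat \<Rightarrow> real) \<Rightarrow> (nat \<Rightarrow> real)) \<Rightarrow> (nat \<Rightarrow> real) \<Rightarrow> (nat \<Rightarrow> real)" where
  "pospart p y = (\<lambda>i. max (p y i) 0)"

definition bias :: "nat \<Rightarrow> real measure \<Rightarrow> ((nat \<Rightarrow> real) \<Rightarrow> (nat \<Rightarrow> real)) \<Rightarrow> (nat \<Rightarrow> real) \<Rightarrow> nat \<Rightarrow> real" where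
  "bias n D p x i = (\<integral>\<eta>. p (\<lambda>j. x j + \<eta> j) i \<partial>(PiM {..<n} (\<lambda>_. D))) - x i"

definition laplace_measure :: "real \<Rightarrow> real measure" where
  "laplace_measure b = density lborel (\<lambda>t. ennreal (exp (- \<bar>t\<bar> / b) / (2 * b)))"

definition gaussian_measure :: "real \<Rightarrow> real measure" where
  "gaussian_measure \<sigma> = density lborel (\<lambda>t. ennreal (normal_density 0 \<sigma> t))"

end

theory Submission
  imports Defs
begin


definition fsum :: "nat \<Rightarrow> (nat \<Rightarrow> real) \<Rightarrow> real \<Rightarrow> real" where
  "fsum n y t = (\<Sum>i<n. max (y i - t) 0)"

definition subsetsn :: "nat \<Rightarrow> nat set set" where
  "subsetsn n = {S. S \<subseteq> {..<n} \<and> S \<noteq> {}}"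

definition tau :: "nat \<Rightarrow> real \<Rightarrow> (nat \<Rightarrow> real) \<Rightarrow> real" where
  "tau n C y = Max ((\<lambda>S. ((\<Sum>i\<in>S. y i) - C) / real (card S)) ` subsetsn n)"

lemma finite_subsetsn: "finite (subsetsn n)"
  unfolding subsetsn_def by (rule finite_subset[of _ "Pow {..<n}"]) auto

lemma subsetsn_ne: "n > 0 \<Longrightarrow> subsetsn n \<noteq> {}"
  unfolding subsetsn_def by (auto intro!: exI[of _ "{0}"])

lemma tau_le:
  assumes "S \<subseteq> {..<n}" "S \<noteq> {}"
  shows "(\<Sum>i\<in>S. y i) - C \<le> real (card S) * tau n C y"
proof -
  have fS: "finite S" using assms finite_subset by blast
  have cS: "real (card S) > 0" using fS assms by (simp add: card_gt_0_iff)
  have "((\<Sum>i\<in>S. y i) - C) / real (card S) \<le> tau n C y"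
    unfolding tau_def using assms finite_subsetsn
    by (intro Max_ge) (auto simp: subsetsn_def)
  then show ?thesis using cS by (simp add: divide_le_eq mult.commute)
qed

lemma tau_attained:
  assumes "n > 0"
  shows "\<exists>S. S \<subseteq> {..<n} \<and> S \<noteq> {} \<and> (\<Sum>i\<in>S. y i) - C = real (card S) * tau n C y"
proof -
  have "tau n C y \<in> (\<lambda>S. ((\<Sum>i\<in>S. y i) - C) / real (card S)) ` subsetsn n"
    unfolding tau_def using finite_subsetsn subsetsn_ne[OF assms] by (intro Max_in) auto
  then obtain S where S: "S \<in> subsetsn n" "tau n C y = ((\<Sum>i\<in>S. y i) - C) / real (card S)" by auto
  have fS: "finite S" using S(1) finite_subset unfolding subsetsn_def by blast
  have cS: "real (card S) > 0" using fS S(1) by (simp add: card_gt_0_iff subsetsn_def)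
  show ?thesis using S cS by (intro exI[of _ S]) (auto simp: subsetsn_def)
qed

lemma fsum_pos_ex:
  assumes "fsum n y t > 0" shows "\<exists>i<n. y i > t"
proof (rule ccontr)
  assume "\<not> ?thesis"
  then have "\<forall>i<n. max (y i - t) 0 = 0" by auto
  then have "fsum n y t = 0" unfolding fsum_def by simp
  with assms show False by simp
qed

lemma fsum_strict:
  assumes "t < s" "i < n" "y i > t"
  shows "fsum n y s < fsum n y t"
  unfolding fsum_def
proof (rule sum_strict_mono_ex1)
  show "\<exists>a\<in>{..<n}. max (y a - s) 0 < max (y a - t) 0"
    using assms by (intro bexI[of _ i]) auto
qed (use assms in \<open>auto simp: max_def\<close>)

lemma fsum_mono:
  assumes "t \<le> s" shows "fsum n y s \<le> fsum n y t"
  unfolding fsum_def using assms by (intro sum_mono) auto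

lemma fsum_tau:
  assumes "n > 0" "C > 0"
  shows "fsum n y (tau n C y) = C"
proof -
  let ?t = "tau n C y"
  obtain S where S: "S \<subseteq> {..<n}" "S \<noteq> {}" "(\<Sum>i\<in>S. y i) - C = real (card S) * ?t"
    using tau_attained[OF assms(1)] by blast
  have fS: "finite S" using S finite_subset by blast
  have ge: "fsum n y ?t \<ge> C"
  proof -
    have "C = (\<Sum>i\<in>S. y i - ?t)" using S(3) by (simp add: sum_subtractf)
    also have "\<dots> \<le> (\<Sum>i\<in>S. max (y i - ?t) 0)" by (intro sum_mono) auto
    also have "\<dots> \<le> fsum n y ?t" unfolding fsum_def using S(1)
      by (intro sum_mono2) auto
    finally show ?thesis .
  qed
  let ?A = "{i. i < n \<and> y i > ?t}"
  have "fsum n y ?t = (\<Sum>i\<in>?A. max (y i - ?t) 0)"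
    unfolding fsum_def by (rule sum.mono_neutral_right) auto
  also have "\<dots> = (\<Sum>i\<in>?A. y i - ?t)" by (intro sum.cong) auto
  also have "\<dots> = (\<Sum>i\<in>?A. y i) - real (card ?A) * ?t" by (simp add: sum_subtractf)
  finally have eq: "fsum n y ?t = (\<Sum>i\<in>?A. y i) - real (card ?A) * ?t" .
  have "?A \<noteq> {}" using fsum_pos_ex[of n y ?t] ge assms by auto
  then have "(\<Sum>i\<in>?A. y i) - C \<le> real (card ?A) * ?t" by (intro tau_le) auto
  with eq ge show ?thesis by linarith
qed

lemma fsum_unique:
  assumes "n > 0" "C > 0" "fsum n y t = C"
  shows "t = tau n C y"
proof (rule ccontr)
  let ?t = "tau n C y"
  assume ne: "t \<noteq> ?t"
  have ft: "fsum n y ?t = C" by (rule fsum_tau[OF assms(1,2)])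
  show False
  proof (cases "t < ?t")
    case True
    obtain i where "i < n" "y i > ?t" using fsum_pos_ex[of n y ?t] ft assms by auto
    then have "fsum n y ?t < fsum n y t" using True by (intro fsum_strict) auto
    with ft assms show False by simp
  next
    case False
    then have lt: "?t < t" using ne by simp
    obtain i where "i < n" "y i > t" using fsum_pos_ex[of n y t] assms by auto
    then have "fsum n y t < fsum n y ?t" using lt by (intro fsum_strict) auto
    with ft assms show False by simp
  qed
qed

lemma tau_ge_mean:
  assumes "n > 0"
  shows "((\<Sum>i<n. y i) - C) / real n \<le> tau n C y"
  using tau_le[of "{..<n}" n y C] assms by (simp add: divide_le_eq mult.commute lessThan_empty_iff)

lemma proj_char:
  assumes z0: "z0 \<in> K" and vi: "\<forall>w\<in>K. (\<Sum>i<n. (w i - z0 i) * (z0 i - y i)) \<ge> 0"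
    and i: "i < n"
  shows "proj n K y i = z0 i"
proof -
  have key: "sqdist n y w \<ge> sqdist n y z0 + (\<Sum>i<n. (w i - z0 i)^2)" if "w \<in> K" for w
  proof -
    have "sqdist n y w = sqdist n y z0 + (\<Sum>i<n. (w i - z0 i)^2) + 2 * (\<Sum>i<n. (w i - z0 i) * (z0 i - y i))"
      unfolding sqdist_def by (simp add: sum.distrib[symmetric] sum_distrib_left power2_eq_square algebra_simps)
    then show ?thesis using vi that by fastforce
  qed
  have ex: "\<exists>z. z \<in> K \<and> (\<forall>w\<in>K. sqdist n y z \<le> sqdist n y w)"
  proof (intro exI[of _ z0] conjI ballI z0)
    fix w assume "w \<in> K" then show "sqdist n y z0 \<le> sqdist n y w"
      using key[of w] by (smt (verit) sum_nonneg zero_le_power2)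
  qed
  define z where "z = proj n K y"
  have z: "z \<in> K" "\<forall>w\<in>K. sqdist n y z \<le> sqdist n y w"
    using someI_ex[OF ex] unfolding z_def proj_def by auto
  have "sqdist n y z0 + (\<Sum>i<n. (z i - z0 i)^2) \<le> sqdist n y z0"
    using key[OF z(1)] z(2) z0 by fastforce
  then have "(\<Sum>i<n. (z i - z0 i)^2) = 0"
    by (smt (verit) sum_nonneg zero_le_power2)
  then have "\<forall>j\<in>{..<n}. (z j - z0 j)^2 = 0"
    by (subst sum_nonneg_eq_0_iff[symmetric]) auto
  then show ?thesis using i unfolding z_def by auto
qed

lemma piSplus_eq:
  assumes "n > 0" "C > 0" "i < n"
  shows "piSplus n C y i = max (y i - tau n C y) 0"
  unfolding piSplus_def
proof (rule proj_char[OF _ _ assms(3)])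
  let ?t = "tau n C y"
  show "(\<lambda>i. max (y i - ?t) 0) \<in> KSplus n C"
    using fsum_tau[OF assms(1,2)] unfolding KSplus_def KS_def fsum_def by auto
  show "\<forall>w\<in>KSplus n C. 0 \<le> (\<Sum>i<n. (w i - max (y i - ?t) 0) * (max (y i - ?t) 0 - y i))"
  proof
    fix w assume w: "w \<in> KSplus n C"
    have "(\<Sum>i<n. (w i - max (y i - ?t) 0) * (max (y i - ?t) 0 - y i)) \<ge> (\<Sum>i<n. - ?t * (w i - max (y i - ?t) 0))"
    proof (intro sum_mono)
      fix i assume "i \<in> {..<n}"
      then have "w i \<ge> 0" using w unfolding KSplus_def by auto
      then show "- ?t * (w i - max (y i - ?t) 0) \<le> (w i - max (y i - ?t) 0) * (max (y i - ?t) 0 - y i)"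
        by (cases "y i > ?t") (auto simp: algebra_simps intro: mult_left_mono)
    qed
    also have "(\<Sum>i<n. - ?t * (w i - max (y i - ?t) 0)) = - ?t * ((\<Sum>i<n. w i) - fsum n y ?t)"
      unfolding fsum_def by (simp only: sum_distrib_left[symmetric] sum_subtractf sum_negf)
    also have "\<dots> = 0" using w fsum_tau[OF assms(1,2)] unfolding KSplus_def KS_def by simp
    finally show "0 \<le> (\<Sum>i<n. (w i - max (y i - ?t) 0) * (max (y i - ?t) 0 - y i))" .
  qed
qed

lemma sum_aux: "(\<Sum>i<n. - t * (w i - y i + t)) = - t * ((\<Sum>i<n. w i) - ((\<Sum>i<n. y i) - real n * t))" for t :: real
  by (simp add: sum.distrib sum_subtractf sum_distrib_left[symmetric] algebra_simps)

lemma piS_eq: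
  assumes "n > 0" "i < n"
  shows "piS n C y i = y i - ((\<Sum>j<n. y j) - C) / real n"
  unfolding piS_def
proof (rule proj_char[OF _ _ assms(2)])
  let ?t = "((\<Sum>j<n. y j) - C) / real n"
  show "(\<lambda>i. y i - ?t) \<in> KS n C"
    using assms unfolding KS_def by (simp add: sum_subtractf)
  show "\<forall>w\<in>KS n C. 0 \<le> (\<Sum>i<n. (w i - (y i - ?t)) * ((y i - ?t) - y i))"
  proof
    fix w assume w: "w \<in> KS n C"
    have "(\<Sum>i<n. (w i - (y i - ?t)) * ((y i - ?t) - y i)) = (\<Sum>i<n. - ?t * (w i - y i + ?t))"
      by (intro sum.cong) (auto simp: algebra_simps)
    also have "\<dots> = - ?t * ((\<Sum>i<n. w i) - ((\<Sum>i<n. y i) - real n * ?t))"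
      by (rule sum_aux)
    also have "\<dots> = 0" using w assms unfolding KS_def by simp
    finally show "0 \<le> (\<Sum>i<n. (w i - (y i - ?t)) * ((y i - ?t) - y i))" by simp
  qed
qed

lemma sum_split2:
  fixes g :: "nat \<Rightarrow> real"
  assumes "n \<ge> 2"
  shows "(\<Sum>i<n. g i) = g 0 + g (n - 1) + (\<Sum>i\<in>{..<n} - {0, n - 1}. g i)"
proof -
  have "(\<Sum>i<n. g i) = g 0 + (\<Sum>i\<in>{..<n} - {0}. g i)"
    using assms by (subst sum.remove[of _ 0]) auto
  also have "(\<Sum>i\<in>{..<n} - {0}. g i) = g (n - 1) + (\<Sum>i\<in>{..<n} - {0} - {n - 1}. g i)"
    using assms by (subst sum.remove[of _ "n - 1"]) auto
  also have "{..<n} - {0} - {n - 1} = {..<n} - {0, n - 1}" by auto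
  finally show ?thesis by simp
qed

lemma tau_compare:
  assumes n: "n \<ge> 2" and C: "C > 0" and d: "\<delta> > 0"
    and y0: "y' 0 = y 0 + \<delta>" and y1: "y' (n - 1) = y (n - 1) - \<delta>"
    and yo: "\<forall>j<n. j \<noteq> 0 \<longrightarrow> j \<noteq> n - 1 \<longrightarrow> y' j = y j"
    and lt: "tau n C y' < y 0"
  shows "tau n C y \<le> tau n C y'"
proof (rule ccontr)
  let ?t = "tau n C y" and ?t' = "tau n C y'"
  assume "\<not> ?t \<le> ?t'"
  then have tt: "?t' < ?t" by simp
  have n0: "n > 0" using n by simp
  have "fsum n y ?t < fsum n y ?t'"
    using n lt tt by (intro fsum_strict[of _ _ 0]) auto
  also have "fsum n y ?t' \<le> fsum n y' ?t'"
  proof -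
    have "fsum n y ?t' = max (y 0 - ?t') 0 + max (y (n - 1) - ?t') 0 + (\<Sum>i\<in>{..<n} - {0, n - 1}. max (y i - ?t') 0)"
      unfolding fsum_def by (rule sum_split2[OF n])
    moreover have "fsum n y' ?t' = max (y' 0 - ?t') 0 + max (y' (n - 1) - ?t') 0 + (\<Sum>i\<in>{..<n} - {0, n - 1}. max (y' i - ?t') 0)"
      unfolding fsum_def by (rule sum_split2[OF n])
    moreover have "(\<Sum>i\<in>{..<n} - {0, n - 1}. max (y' i - ?t') 0) = (\<Sum>i\<in>{..<n} - {0, n - 1}. max (y i - ?t') 0)"
      using yo by (intro sum.cong) auto
    moreover have "max (y 0 - ?t') 0 + max (y (n - 1) - ?t') 0 \<le> max (y' 0 - ?t') 0 + max (y' (n - 1) - ?t') 0"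
      using y0 y1 lt d by (auto simp: max_def)
    ultimately show ?thesis by linarith
  qed
  finally have "fsum n y ?t < fsum n y' ?t'" .
  then show False using fsum_tau[OF n0 C, of y] fsum_tau[OF n0 C, of y'] by simp
qed

lemma key_pw:
  assumes n: "n \<ge> 2" and C: "C > 0" and d: "\<delta> > 0"
    and y0: "y' 0 = y 0 + \<delta>" and y1: "y' (n - 1) = y (n - 1) - \<delta>"
    and yo: "\<forall>j<n. j \<noteq> 0 \<longrightarrow> j \<noteq> n - 1 \<longrightarrow> y' j = y j"
    and ssum: "(\<Sum>j<n. y' j) = (\<Sum>j<n. y j)"
  shows "max (y' 0 - tau n C y') 0 - max (y 0 - tau n C y) 0
     \<le> max (y' 0 - ((\<Sum>j<n. y j) - C) / real n) 0 - max (y 0 - ((\<Sum>j<n. y j) - C) / real n) 0"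
proof -
  let ?t = "tau n C y" and ?t' = "tau n C y'" and ?s = "((\<Sum>j<n. y j) - C) / real n"
  have n0: "n > 0" using n by simp
  have ts: "?s \<le> ?t" by (rule tau_ge_mean[OF n0])
  have ts': "?s \<le> ?t'" using tau_ge_mean[OF n0, of y' C] ssum by simp
  have cmp: "?t' < y 0 \<Longrightarrow> ?t \<le> ?t'" by (rule tau_compare[OF n C d y0 y1 yo])
  show ?thesis
  proof (cases "y 0 \<le> ?s")
    case True
    then show ?thesis using ts ts' y0 by (auto simp: max_def)
  next
    case False
    show ?thesis
    proof (cases "?t' < y 0")
      case True
      then have "?t \<le> ?t'" by (rule cmp)
      then show ?thesis using False ts ts' y0 d by (auto simp: max_def)
    next
      case F2: False
      then show ?thesis using False ts ts' y0 d by (auto simp: max_def)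
    qed
  qed
qed

definition sw :: "nat \<Rightarrow> nat \<Rightarrow> nat" where
  "sw n j = (if j = 0 then n - 1 else if j = n - 1 then 0 else j)"

lemma sw_sw: "sw n (sw n j) = j"
  unfolding sw_def by auto

lemma sw_lt: "n > 0 \<Longrightarrow> j < n \<Longrightarrow> sw n j < n"
  unfolding sw_def by auto

lemma sum_sw:
  fixes g :: "nat \<Rightarrow> real"
  assumes "n > 0"
  shows "(\<Sum>i<n. g (sw n i)) = (\<Sum>i<n. g i)"
  by (rule sum.reindex_bij_witness[of _ "sw n" "sw n"]) (use assms in \<open>auto simp: sw_sw sw_lt\<close>)

lemma tau_fsum_eq:
  assumes "n > 0" "C > 0" "\<And>t. fsum n y t = fsum n z t"
  shows "tau n C y = tau n C z"
  using fsum_unique[OF assms(1,2), of z "tau n C y"] fsum_tau[OF assms(1,2), of y] assms(3) by simp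



lemma prod_pos_ennreal:
  fixes f :: "'a \<Rightarrow> ennreal"
  shows "finite I \<Longrightarrow> (\<forall>i\<in>I. f i > 0) \<Longrightarrow> prod f I > 0"
  by (induction I rule: finite_induct) (auto simp: ennreal_zero_less_mult_iff)

lemma max_le_fsum: "i < n \<Longrightarrow> max (y i - t) 0 \<le> fsum n y t"
  unfolding fsum_def by (rule member_le_sum) auto

lemma generic:
  fixes n :: nat and C :: real and x :: "nat \<Rightarrow> real" and D :: "real measure"
  assumes n: "n \<ge> 2" and C: "C > 0"
    and xK: "x \<in> KSplus n C"
    and mono: "\<forall>i j. i \<le> j \<longrightarrow> j < n \<longrightarrow> x i \<le> x j"
    and xlt: "x (n - 1) > x 0"
    and PD: "prob_space D" and sD: "sets D = sets borel"
    and intD: "integrable D (\<lambda>t. t)"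
    and posL: "\<And>a. emeasure D {..<a} > 0" and posI: "emeasure D {-1..1} > 0"
  shows "(Max ((\<lambda>i. bias n D (piSplus n C) x i) ` {..<n})
            - Min ((\<lambda>i. bias n D (piSplus n C) x i) ` {..<n}))
           \<ge> bias n D (pospart (piS n C)) x 0 - bias n D (pospart (piS n C)) x (n - 1)
       \<and> bias n D (pospart (piS n C)) x 0 - bias n D (pospart (piS n C)) x (n - 1) > 0"
proof -
  define \<mu> where "\<mu> = PiM {..<n} (\<lambda>_. D)"
  interpret D: prob_space D by (rule PD)
  have P\<mu>: "prob_space \<mu>" unfolding \<mu>_def by (rule prob_space_PiM) (use PD in auto)
  interpret M: prob_space \<mu> by (rule P\<mu>)
  have n0: "n > 0" using n by simp
  have compD: "(\<lambda>\<eta>. \<eta> j) \<in> measurable \<mu> D" if "j < n" for j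
    unfolding \<mu>_def using that by (intro measurable_component_singleton) auto
  have comp[measurable]: "(\<lambda>\<eta>. \<eta> j) \<in> borel_measurable \<mu>" if "j < n" for j
    using compD[OF that, unfolded measurable_cong_sets[OF refl sD]] .
  have idD: "(\<lambda>t. t) \<in> borel_measurable D" using borel_measurable_integrable[OF intD] .
  have intc: "integrable \<mu> (\<lambda>\<eta>. \<eta> j)" if "j < n" for j
  proof -
    have "distr \<mu> D (\<lambda>\<eta>. \<eta> j) = D" unfolding \<mu>_def
      using distr_PiM_component[of "{..<n}" "\<lambda>_. D" j] PD that by auto
    then have "integrable (distr \<mu> D (\<lambda>\<eta>. \<eta> j)) (\<lambda>t. t)" using intD by simp
    then show ?thesis using integrable_distr_eq[OF compD[OF that] idD] by simp
  qed
  have tau_meas: "(\<lambda>\<eta>. tau n C (\<lambda>j. z j \<eta>)) \<in> borel_measurable \<mu>"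
    if zm: "\<And>j. j < n \<Longrightarrow> z j \<in> borel_measurable \<mu>" for z
    unfolding tau_def
  proof (rule borel_measurable_Max[OF finite_subsetsn, where f="\<lambda>S \<eta>. ((\<Sum>i\<in>S. z i \<eta>) - C) / real (card S)"])
    fix S assume "S \<in> subsetsn n"
    then have "\<forall>i\<in>S. i < n" unfolding subsetsn_def by auto
    then show "(\<lambda>\<eta>. ((\<Sum>i\<in>S. z i \<eta>) - C) / real (card S)) \<in> borel_measurable \<mu>"
      using zm by (intro borel_measurable_divide borel_measurable_diff borel_measurable_sum) auto
  qed

  have x0: "x 0 \<ge> 0" and sx: "(\<Sum>j<n. x j) = C" using xK n0 unfolding KSplus_def KS_def by auto
  define \<delta> where "\<delta> = x (n - 1) - x 0"
  have d: "\<delta> > 0" using xlt unfolding \<delta>_def by simp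
  define xs where "xs = (\<lambda>j. x (sw n j))"
  define s where "s = (\<lambda>\<eta>::nat\<Rightarrow>real. ((\<Sum>j<n. x j + \<eta> j) - C) / real n)"
  define a0 where "a0 = (\<lambda>\<eta>::nat\<Rightarrow>real. max (x 0 + \<eta> 0 - tau n C (\<lambda>j. x j + \<eta> j)) 0)"
  define a1 where "a1 = (\<lambda>\<eta>::nat\<Rightarrow>real. max (x (n - 1) + \<eta> (n - 1) - tau n C (\<lambda>j. x j + \<eta> j)) 0)"
  define a' where "a' = (\<lambda>\<eta>::nat\<Rightarrow>real. max (x (n - 1) + \<eta> 0 - tau n C (\<lambda>j. xs j + \<eta> j)) 0)"
  define q0 where "q0 = (\<lambda>\<eta>::nat\<Rightarrow>real. max (x 0 + \<eta> 0 - s \<eta>) 0)"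
  define q1 where "q1 = (\<lambda>\<eta>::nat\<Rightarrow>real. max (x (n - 1) + \<eta> (n - 1) - s \<eta>) 0)"
  define q' where "q' = (\<lambda>\<eta>::nat\<Rightarrow>real. max (x (n - 1) + \<eta> 0 - s \<eta>) 0)"
  have n1: "n - 1 < n" using n0 by simp
  have sw1: "sw n (n - 1) = 0" using n unfolding sw_def by auto
  have sw0: "sw n 0 = n - 1" unfolding sw_def by simp
  have bS: "bias n D (piSplus n C) x i = integral\<^sup>L \<mu> (\<lambda>\<eta>. max (x i + \<eta> i - tau n C (\<lambda>j. x j + \<eta> j)) 0) - x i"
    if "i < n" for i
    unfolding bias_def \<mu>_def[symmetric] using piSplus_eq[OF n0 C that] by simp
  have bQ: "bias n D (pospart (piS n C)) x i = integral\<^sup>L \<mu> (\<lambda>\<eta>. max (x i + \<eta> i - s \<eta>) 0) - x i"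
    if "i < n" for i
    unfolding bias_def \<mu>_def[symmetric] pospart_def s_def using piS_eq[OF n0 that] by simp
  have tm1[measurable]: "(\<lambda>\<eta>. tau n C (\<lambda>j. x j + \<eta> j)) \<in> borel_measurable \<mu>"
    using tau_meas[of "\<lambda>j \<eta>. x j + \<eta> j"] comp by auto
  have tm2[measurable]: "(\<lambda>\<eta>. tau n C (\<lambda>j. xs j + \<eta> j)) \<in> borel_measurable \<mu>"
    using tau_meas[of "\<lambda>j \<eta>. xs j + \<eta> j"] comp by auto
  have sm[measurable]: "s \<in> borel_measurable \<mu>"
    unfolding s_def using comp by (intro borel_measurable_divide borel_measurable_diff borel_measurable_sum) auto
  have c0[measurable]: "(\<lambda>\<eta>. \<eta> 0) \<in> borel_measurable \<mu>" using comp n0 by auto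
  have c1[measurable]: "(\<lambda>\<eta>. \<eta> (n - 1)) \<in> borel_measurable \<mu>" using comp n1 by auto
  have ma0[measurable]: "a0 \<in> borel_measurable \<mu>" unfolding a0_def by measurable
  have ma1[measurable]: "a1 \<in> borel_measurable \<mu>" unfolding a1_def by measurable
  have ma'[measurable]: "a' \<in> borel_measurable \<mu>" unfolding a'_def by measurable
  have mq0[measurable]: "q0 \<in> borel_measurable \<mu>" unfolding q0_def by measurable
  have mq1[measurable]: "q1 \<in> borel_measurable \<mu>" unfolding q1_def by measurable
  have mq'[measurable]: "q' \<in> borel_measurable \<mu>" unfolding q'_def by measurable
  have bnd: "norm (max (y i - tau n C y) 0) \<le> C" if "i < n" for y i
    using max_le_fsum[OF that, of y "tau n C y"] fsum_tau[OF n0 C, of y] by simp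
  have ia0: "integrable \<mu> a0"
  proof (rule M.integrable_const_bound[where B=C])
    have "norm (a0 \<eta>) \<le> C" for \<eta> using bnd[of 0 "\<lambda>j. x j + \<eta> j"] n0 by (simp add: a0_def)
    then show "AE \<eta> in \<mu>. norm (a0 \<eta>) \<le> C" by simp
  qed simp
  have ia': "integrable \<mu> a'"
  proof (rule M.integrable_const_bound[where B=C])
    have "norm (a' \<eta>) \<le> C" for \<eta> using bnd[of 0 "\<lambda>j. xs j + \<eta> j"] n0 by (simp add: a'_def xs_def sw0)
    then show "AE \<eta> in \<mu>. norm (a' \<eta>) \<le> C" by simp
  qed simp
  have iss: "integrable \<mu> s"
  proof -
    have "integrable \<mu> (\<lambda>\<eta>. \<Sum>j<n. x j + \<eta> j)"
      by (intro Bochner_Integration.integrable_sum Bochner_Integration.integrable_add intc) auto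
    then have "integrable \<mu> (\<lambda>\<eta>. (\<Sum>j<n. x j + \<eta> j) - C)"
      by (rule Bochner_Integration.integrable_diff) simp
    then show ?thesis unfolding s_def by (rule integrable_divide)
  qed
  have iq0: "integrable \<mu> q0"
    unfolding q0_def using iss intc n0 by (intro integrable_max Bochner_Integration.integrable_diff Bochner_Integration.integrable_add) auto
  have iq': "integrable \<mu> q'"
    unfolding q'_def using iss intc n0 by (intro integrable_max Bochner_Integration.integrable_diff Bochner_Integration.integrable_add) auto

  define \<rho> where "\<rho> = (\<lambda>\<eta>::nat\<Rightarrow>real. \<lambda>k\<in>{..<n}. \<eta> (sw n k))"
  have "\<rho> \<in> measurable \<mu> (PiM {..<n} (\<lambda>_. D))"
    unfolding \<rho>_def by (rule measurable_restrict) (use compD sw_lt n0 in auto)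
  then have \<rho>m: "\<rho> \<in> measurable \<mu> \<mu>" unfolding \<mu>_def .
  have injsw: "inj_on (sw n) {..<n}" by (rule inj_on_inverseI[where g="sw n"]) (simp add: sw_sw)
  have dr: "distr \<mu> \<mu> \<rho> = \<mu>"
    unfolding \<mu>_def \<rho>_def using distr_PiM_reindex[of "{..<n}" "\<lambda>_. D" "sw n" "{..<n}"] PD injsw sw_lt n0
    by auto
  have swapI: "integral\<^sup>L \<mu> h = integral\<^sup>L \<mu> (\<lambda>\<eta>. h (\<rho> \<eta>))" if "h \<in> borel_measurable \<mu>" for h :: "(nat \<Rightarrow> real) \<Rightarrow> real"
    using integral_distr[OF \<rho>m that] dr by simp
  have \<rho>1: "\<rho> \<eta> (n - 1) = \<eta> 0" for \<eta> unfolding \<rho>_def using n1 sw1 by simp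
  have sumx: "(\<Sum>j<n. x (sw n j)) = (\<Sum>j<n. x j)" by (rule sum_sw[OF n0])
  have s\<rho>: "s (\<rho> \<eta>) = s \<eta>" for \<eta>
  proof -
    have "(\<Sum>j<n. x j + \<rho> \<eta> j) = (\<Sum>j<n. x j + \<eta> (sw n j))"
      unfolding \<rho>_def by (intro sum.cong) auto
    also have "\<dots> = (\<Sum>j<n. x j) + (\<Sum>j<n. \<eta> (sw n j))" by (simp add: sum.distrib)
    also have "(\<Sum>j<n. \<eta> (sw n j)) = (\<Sum>j<n. \<eta> j)" by (rule sum_sw[OF n0])
    finally show ?thesis unfolding s_def by (simp add: sum.distrib)
  qed
  have tau\<rho>: "tau n C (\<lambda>j. x j + \<rho> \<eta> j) = tau n C (\<lambda>j. xs j + \<eta> j)" for \<eta>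
  proof (rule tau_fsum_eq[OF n0 C])
    fix t
    have "fsum n (\<lambda>j. x j + \<rho> \<eta> j) t = (\<Sum>i<n. max (x (sw n (sw n i)) + \<eta> (sw n i) - t) 0)"
      unfolding fsum_def \<rho>_def by (intro sum.cong) (auto simp: sw_sw)
    also have "\<dots> = (\<Sum>i<n. max (x (sw n i) + \<eta> i - t) 0)"
      by (rule sum_sw[OF n0, where g="\<lambda>i. max (x (sw n i) + \<eta> i - t) 0"])
    finally show "fsum n (\<lambda>j. x j + \<rho> \<eta> j) t = fsum n (\<lambda>j. xs j + \<eta> j) t"
      unfolding fsum_def xs_def by simp
  qed
  have Ia1: "integral\<^sup>L \<mu> a1 = integral\<^sup>L \<mu> a'"
    using swapI[OF ma1] unfolding a1_def a'_def \<rho>1 tau\<rho> by simp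
  have Iq1: "integral\<^sup>L \<mu> q1 = integral\<^sup>L \<mu> q'"
    using swapI[OF mq1] unfolding q1_def q'_def \<rho>1 s\<rho> by simp
  have pw: "a' \<eta> - a0 \<eta> \<le> q' \<eta> - q0 \<eta>" for \<eta>
  proof -
    have ss: "(\<Sum>j<n. xs j + \<eta> j) = (\<Sum>j<n. x j + \<eta> j)"
      using sumx unfolding xs_def by (simp add: sum.distrib)
    have "max ((\<lambda>j. xs j + \<eta> j) 0 - tau n C (\<lambda>j. xs j + \<eta> j)) 0 - max ((\<lambda>j. x j + \<eta> j) 0 - tau n C (\<lambda>j. x j + \<eta> j)) 0
       \<le> max ((\<lambda>j. xs j + \<eta> j) 0 - ((\<Sum>j<n. x j + \<eta> j) - C) / real n) 0 - max ((\<lambda>j. x j + \<eta> j) 0 - ((\<Sum>j<n. x j + \<eta> j) - C) / real n) 0"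
      by (rule key_pw[OF n C d]) (use ss in \<open>auto simp: xs_def sw_def \<delta>_def\<close>)
    then show ?thesis unfolding a'_def a0_def q'_def q0_def s_def xs_def sw0 by simp
  qed
  have ineq: "integral\<^sup>L \<mu> a' - integral\<^sup>L \<mu> a0 \<le> integral\<^sup>L \<mu> q' - integral\<^sup>L \<mu> q0"
  proof -
    have "integral\<^sup>L \<mu> (\<lambda>\<eta>. a' \<eta> - a0 \<eta>) \<le> integral\<^sup>L \<mu> (\<lambda>\<eta>. q' \<eta> - q0 \<eta>)"
      by (intro integral_mono Bochner_Integration.integrable_diff ia' ia0 iq' iq0 pw)
    then show ?thesis using ia' ia0 iq' iq0 by simp
  qed
  have BS0: "bias n D (piSplus n C) x 0 = integral\<^sup>L \<mu> a0 - x 0" using bS[OF n0] unfolding a0_def .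
  have BS1: "bias n D (piSplus n C) x (n - 1) = integral\<^sup>L \<mu> a' - x (n - 1)"
    using bS[OF n1] Ia1 unfolding a1_def by simp
  have BQ0: "bias n D (pospart (piS n C)) x 0 = integral\<^sup>L \<mu> q0 - x 0" using bQ[OF n0] unfolding q0_def .
  have BQ1: "bias n D (pospart (piS n C)) x (n - 1) = integral\<^sup>L \<mu> q' - x (n - 1)"
    using bQ[OF n1] Iq1 unfolding q1_def by simp
  let ?f = "\<lambda>i. bias n D (piSplus n C) x i"
  have "?f 0 \<le> Max (?f ` {..<n})" using n0 by (intro Max_ge) auto
  moreover have "Min (?f ` {..<n}) \<le> ?f (n - 1)" using n1 by (intro Min_le) auto
  ultimately have goal1: "Max (?f ` {..<n}) - Min (?f ` {..<n}) \<ge> bias n D (pospart (piS n C)) x 0 - bias n D (pospart (piS n C)) x (n - 1)"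
    using BS0 BS1 BQ0 BQ1 ineq by linarith

  define h where "h = (\<lambda>\<eta>. \<delta> + q0 \<eta> - q' \<eta>)"
  have hnn: "h \<eta> \<ge> 0" for \<eta> using d unfolding h_def q0_def q'_def \<delta>_def by (auto simp: max_def)
  have hpos: "x 0 + \<eta> 0 - s \<eta> < 0 \<Longrightarrow> h \<eta> > 0" for \<eta>
    using d unfolding h_def q0_def q'_def \<delta>_def by (auto simp: max_def)
  have ih: "integrable \<mu> h" unfolding h_def
    by (intro Bochner_Integration.integrable_diff Bochner_Integration.integrable_add iq0 iq') simp
  have Ih: "integral\<^sup>L \<mu> h = \<delta> + integral\<^sup>L \<mu> q0 - integral\<^sup>L \<mu> q'"
    unfolding h_def using iq0 iq' by (simp add: M.prob_space)
  have Ipos: "integral\<^sup>L \<mu> h > 0"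
  proof (rule ccontr)
    assume "\<not> ?thesis"
    moreover have "integral\<^sup>L \<mu> h \<ge> 0" using hnn by (intro integral_nonneg_AE) auto
    ultimately have "integral\<^sup>L \<mu> h = 0" by simp
    then have "AE \<eta> in \<mu>. h \<eta> = 0" using integral_nonneg_eq_0_iff_AE[OF ih] hnn by simp
    then have AEu: "AE \<eta> in \<mu>. \<not> (x 0 + \<eta> 0 - s \<eta> < 0)"
      by eventually_elim (use hpos in force)
    then obtain N where N: "{\<eta> \<in> space \<mu>. \<not> \<not> (x 0 + \<eta> 0 - s \<eta> < 0)} \<subseteq> N" "emeasure \<mu> N = 0" "N \<in> sets \<mu>"
      by (rule AE_E)
    define F where "F = (\<lambda>j::nat. if j = 0 then {..< -(2 * x 0 + 2)} else {-1..1::real})"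
    define B where "B = PiE {..<n} F"
    have spD: "space D = UNIV" using sets_eq_imp_space_eq[OF sD] by simp
    have Bsp: "B \<subseteq> space \<mu>" unfolding B_def \<mu>_def space_PiM spD by (auto simp: PiE_iff)
    have Bu: "x 0 + \<eta> 0 - s \<eta> < 0" if "\<eta> \<in> B" for \<eta>
    proof -
      have "\<eta> 0 \<in> F 0" using that n0 unfolding B_def by (auto simp: PiE_iff)
      then have e0: "\<eta> 0 < -(2 * x 0 + 2)" unfolding F_def by simp
      have e1: "\<eta> j \<ge> -1" if "j \<in> {..<n} - {0}" for j
      proof -
        have "\<eta> j \<in> F j" using \<open>\<eta> \<in> B\<close> that unfolding B_def by (auto simp: PiE_iff)
        then show ?thesis using that unfolding F_def by simp
      qed
      have "(\<Sum>j<n. \<eta> j) = \<eta> 0 + (\<Sum>j\<in>{..<n} - {0}. \<eta> j)" using n0 by (subst sum.remove[of _ 0]) auto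
      moreover have "(\<Sum>j\<in>{..<n} - {0}. \<eta> j) \<ge> (\<Sum>j\<in>{..<n} - {0}. -1)" by (intro sum_mono e1)
      moreover have "(\<Sum>j\<in>{..<n} - {0}. (-1::real)) = - (real n - 1)" using n0 by (simp add: of_nat_diff)
      ultimately have S: "(\<Sum>j<n. \<eta> j) \<ge> \<eta> 0 - (real n - 1)" by linarith
      have "s \<eta> = (\<Sum>j<n. \<eta> j) / real n" unfolding s_def using sx by (simp add: sum.distrib)
      moreover have "real n * (x 0 + \<eta> 0) < \<eta> 0 - (real n - 1)"
      proof -
        have m1: "real n - 1 \<ge> 1" using n by simp
        have A1: "(real n - 1) * \<eta> 0 < (real n - 1) * (-(2 * x 0 + 2))"
          using m1 e0 by (intro mult_strict_left_mono) auto
        have A2: "(real n - 2) * x 0 \<ge> 0" using n x0 by simp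
        show ?thesis using A1 A2 m1 x0 by (simp add: algebra_simps)
      qed
      ultimately have "real n * (x 0 + \<eta> 0) < real n * s \<eta>" using S n0 by simp
      then have "x 0 + \<eta> 0 < s \<eta>" using n0 by (simp only: mult_less_cancel_left_pos of_nat_0_less_iff)
      then show ?thesis by simp
    qed
    have "B \<subseteq> N" using N(1) Bsp Bu by auto
    then have "emeasure \<mu> B \<le> emeasure \<mu> N" by (intro emeasure_mono N(3))
    then have B0: "emeasure \<mu> B = 0" using N(2) by simp
    interpret PS: product_sigma_finite "\<lambda>_::nat. D"
      by standard
    have "emeasure \<mu> B = (\<Prod>j<n. emeasure D (F j))"
      unfolding \<mu>_def B_def by (rule PS.emeasure_PiM) (auto simp: F_def sD)
    also have "\<dots> > 0" by (rule prod_pos_ennreal) (auto simp: F_def posL posI)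
    finally show False using B0 by simp
  qed
  have goal2: "bias n D (pospart (piS n C)) x 0 - bias n D (pospart (piS n C)) x (n - 1) > 0"
    using BQ0 BQ1 Ipos Ih unfolding \<delta>_def by simp
  show ?thesis using goal1 goal2 by simp
qed



lemma dens_pos:
  fixes g :: "real \<Rightarrow> real"
  assumes gm[measurable]: "g \<in> borel_measurable borel" and gp: "\<And>t. g t > 0"
    and A[measurable]: "A \<in> sets borel" and An: "emeasure lborel A \<noteq> 0"
  shows "emeasure (density lborel (\<lambda>t. ennreal (g t))) A > 0"
proof (rule ccontr)
  assume "\<not> ?thesis"
  then have "(\<integral>\<^sup>+t. ennreal (g t) * indicator A t \<partial>lborel) = 0"
    by (simp add: emeasure_density)
  then have "AE t in lborel. ennreal (g t) * indicator A t = 0"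
    by (subst (asm) nn_integral_0_iff_AE) auto
  then have "AE t in lborel. t \<notin> A"
  proof eventually_elim
    case (elim t)
    show "t \<notin> A"
    proof
      assume "t \<in> A"
      then have "ennreal (g t) = 0" using elim by simp
      moreover have "ennreal (g t) > 0" using gp[of t] by simp
      ultimately show False by simp
    qed
  qed
  then have "emeasure lborel A = 0"
    by (subst (asm) AE_iff_measurable[of A]) auto
  with An show False by simp
qed

lemma lborel_Iio_ne0: "emeasure lborel {..<a::real} \<noteq> 0"
proof -
  have "emeasure lborel {a - 1<..<a} \<le> emeasure lborel {..<a}" by (intro emeasure_mono) auto
  moreover have "emeasure lborel {a - 1<..<a} = 1" by simp
  ultimately show ?thesis by auto
qed

lemma lborel_Icc_ne0: "emeasure lborel {-1..1::real} \<noteq> 0"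
  by simp

lemma gaussian_props:
  assumes s: "\<sigma> > 0"
  shows "prob_space (gaussian_measure \<sigma>)" "sets (gaussian_measure \<sigma>) = sets borel"
    "integrable (gaussian_measure \<sigma>) (\<lambda>t. t)"
    "\<And>a. emeasure (gaussian_measure \<sigma>) {..<a} > 0" "emeasure (gaussian_measure \<sigma>) {-1..1} > 0"
proof -
  show "prob_space (gaussian_measure \<sigma>)" unfolding gaussian_measure_def
    using prob_space_normal_density[OF s, of 0] by simp
  show "sets (gaussian_measure \<sigma>) = sets borel" unfolding gaussian_measure_def by simp
  show "integrable (gaussian_measure \<sigma>) (\<lambda>t. t)" unfolding gaussian_measure_def
    using integrable_normal_moment_nz_1[OF s, of 0]
    by (subst integrable_density) (auto simp: normal_density_nonneg)
  show "\<And>a. emeasure (gaussian_measure \<sigma>) {..<a} > 0" unfolding gaussian_measure_def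
    by (rule dens_pos) (auto simp: normal_density_pos[OF s] lborel_Iio_ne0)
  show "emeasure (gaussian_measure \<sigma>) {-1..1} > 0" unfolding gaussian_measure_def
    by (rule dens_pos) (auto simp: normal_density_pos[OF s])
qed



lemma lap_pt:
  assumes b: "b > 0" and t: "t \<noteq> 0"
  shows "exp (- \<bar>t\<bar> / b) / (2 * b) = erlang_density 0 (1/b) t / 2 + erlang_density 0 (1/b) (-t) / 2"
proof (cases "t > 0")
  case True then show ?thesis unfolding erlang_density_def by (simp add: field_simps)
next
  case False then have "t < 0" using t by simp
  then show ?thesis unfolding erlang_density_def by (simp add: field_simps)
qed

lemma enn_half:
  fixes u v :: real
  assumes "0 \<le> u" "0 \<le> v"
  shows "ennreal (u/2 + v/2) = ennreal u * ennreal (1/2) + ennreal v * ennreal (1/2)"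
proof -
  have "ennreal (u/2 + v/2) = ennreal (u/2) + ennreal (v/2)" by (rule ennreal_plus) (use assms in auto)
  moreover have "ennreal (u/2) = ennreal u * ennreal (1/2)" by (subst ennreal_mult[symmetric]) (use assms in auto)
  moreover have "ennreal (v/2) = ennreal v * ennreal (1/2)" by (subst ennreal_mult[symmetric]) (use assms in auto)
  ultimately show ?thesis by simp
qed

lemma half_le1: "0 \<le> (c::real) \<Longrightarrow> 0 < b \<Longrightarrow> c / (b * 2) \<le> c / b"
proof -
  assume a: "0 \<le> c" "0 < b"
  have "c / (b * 2) = (c / b) / 2" by simp
  moreover have "c / b \<ge> 0" using a by simp
  ultimately show ?thesis by linarith
qed

lemma half_le2: "(c::real) \<le> 0 \<Longrightarrow> 0 < b \<Longrightarrow> c / b \<le> c / (b * 2)"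
proof -
  assume a: "c \<le> 0" "0 < b"
  have "c / (b * 2) = (c / b) / 2" by simp
  moreover have "c / b \<le> 0" using a by (simp add: divide_nonpos_pos)
  ultimately show ?thesis by linarith
qed

lemma laplace_props:
  assumes b: "b > 0"
  shows "prob_space (laplace_measure b)" "sets (laplace_measure b) = sets borel"
    "integrable (laplace_measure b) (\<lambda>t. t)"
    "\<And>a. emeasure (laplace_measure b) {..<a} > 0" "emeasure (laplace_measure b) {-1..1} > 0"
proof -
  define e where "e = erlang_density 0 (1/b)"
  have lb: "1/b > 0" using b by simp
  have em[measurable]: "e \<in> borel_measurable borel" unfolding e_def by simp
  have enn: "e t \<ge> 0" for t unfolding e_def using lb by simp
  have gm[measurable]: "(\<lambda>t. exp (- \<bar>t\<bar> / b) / (2 * b)) \<in> borel_measurable borel" by measurable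
  have refl: "(\<integral>\<^sup>+t. f (- t) \<partial>lborel) = (\<integral>\<^sup>+t. f t \<partial>lborel)" if [measurable]: "f \<in> borel_measurable borel" for f :: "real \<Rightarrow> ennreal"
    using nn_integral_real_affine[OF that, of "-1" 0] by simp
  have E0: "(\<integral>\<^sup>+t. ennreal (e t) \<partial>lborel) = 1"
    using nn_integral_erlang_ith_moment[OF lb, of 0 0] unfolding e_def by simp
  have E1: "(\<integral>\<^sup>+t. ennreal (e t * t) \<partial>lborel) < \<infinity>"
    using nn_integral_erlang_ith_moment[OF lb, of 0 1] unfolding e_def by simp
  have half: "ennreal (1/2) + ennreal (1/2) = 1" by (subst ennreal_plus[symmetric]) auto
  have AE0: "AE t in lborel. t \<noteq> 0" by (rule AE_lborel_singleton)
  show "prob_space (laplace_measure b)"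
  proof
    have "emeasure (laplace_measure b) (space (laplace_measure b)) = (\<integral>\<^sup>+t. ennreal (exp (- \<bar>t\<bar> / b) / (2 * b)) \<partial>lborel)"
      unfolding laplace_measure_def by (simp add: emeasure_density)
    also have "\<dots> = (\<integral>\<^sup>+t. ennreal (e t) * ennreal (1/2) + ennreal (e (- t)) * ennreal (1/2) \<partial>lborel)"
    proof (rule nn_integral_cong_AE)
      show "AE t in lborel. ennreal (exp (- \<bar>t\<bar> / b) / (2 * b)) = ennreal (e t) * ennreal (1/2) + ennreal (e (- t)) * ennreal (1/2)"
        using AE0 proof eventually_elim
        case (elim t)
        show ?case unfolding lap_pt[OF b elim] e_def[symmetric] by (rule enn_half[OF enn enn])
      qed
    qed
    also have "\<dots> = (\<integral>\<^sup>+t. ennreal (e t) \<partial>lborel) * ennreal (1/2) + (\<integral>\<^sup>+t. ennreal (e (- t)) \<partial>lborel) * ennreal (1/2)"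
      by (simp add: nn_integral_add nn_integral_multc)
    also have "(\<integral>\<^sup>+t. ennreal (e (- t)) \<partial>lborel) = 1"
      using refl[of "\<lambda>t. ennreal (e t)"] E0 by simp
    finally show "emeasure (laplace_measure b) (space (laplace_measure b)) = 1"
      using E0 half by simp
  qed
  show "sets (laplace_measure b) = sets borel" unfolding laplace_measure_def by simp
  show "integrable (laplace_measure b) (\<lambda>t. t)" unfolding laplace_measure_def
  proof (subst integrable_density)
    show "integrable lborel (\<lambda>t. (exp (- \<bar>t\<bar> / b) / (2 * b)) *\<^sub>R t)"
    proof (subst integrable_iff_bounded, intro conjI)
      show "(\<lambda>t. (exp (- \<bar>t\<bar> / b) / (2 * b)) *\<^sub>R t) \<in> borel_measurable lborel" by measurable
      have "(\<integral>\<^sup>+t. ennreal (norm ((exp (- \<bar>t\<bar> / b) / (2 * b)) *\<^sub>R t)) \<partial>lborel)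
          \<le> (\<integral>\<^sup>+t. ennreal (e t * t) + ennreal (e (- t) * (- t)) \<partial>lborel)"
      proof (rule nn_integral_mono)
        fix t :: real
        have "norm ((exp (- \<bar>t\<bar> / b) / (2 * b)) *\<^sub>R t) \<le> e t * t + e (- t) * (- t)"
        proof (cases "t = 0")
          case False
          have "norm ((exp (- \<bar>t\<bar> / b) / (2 * b)) *\<^sub>R t) = exp (- \<bar>t\<bar> / b) / (2 * b) * \<bar>t\<bar>"
            using b by (simp add: abs_mult)
          also have "\<dots> = (e t / 2 + e (- t) / 2) * \<bar>t\<bar>" using lap_pt[OF b False] unfolding e_def by simp
          also have "\<dots> \<le> e t * t + e (- t) * (- t)"
            using enn[of t] enn[of "-t"] b unfolding e_def erlang_density_def
            by (auto simp: abs_if intro!: half_le1 half_le2 mult_nonneg_nonneg mult_nonneg_nonpos)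
          finally show ?thesis .
        qed simp
        moreover have "e t * t + e (- t) * (- t) = e t * t + e (- t) * (- t)" ..
        ultimately show "ennreal (norm ((exp (- \<bar>t\<bar> / b) / (2 * b)) *\<^sub>R t)) \<le> ennreal (e t * t) + ennreal (e (- t) * (- t))"
          using enn[of t] enn[of "-t"] unfolding e_def erlang_density_def
          by (smt (verit) ennreal_le_iff ennreal_plus mult_nonneg_nonneg mult_nonpos_nonpos norm_ge_zero)
      qed
      also have "\<dots> = (\<integral>\<^sup>+t. ennreal (e t * t) \<partial>lborel) + (\<integral>\<^sup>+t. ennreal (e (- t) * (- t)) \<partial>lborel)"
        by (simp add: nn_integral_add)
      also have "(\<integral>\<^sup>+t. ennreal (e (- t) * (- t)) \<partial>lborel) = (\<integral>\<^sup>+t. ennreal (e t * t) \<partial>lborel)"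
        using refl[of "\<lambda>t. ennreal (e t * t)"] by simp
      also have "(\<integral>\<^sup>+t. ennreal (e t * t) \<partial>lborel) + (\<integral>\<^sup>+t. ennreal (e t * t) \<partial>lborel) < \<infinity>"
        using E1 by simp
      finally show "(\<integral>\<^sup>+t. ennreal (norm ((exp (- \<bar>t\<bar> / b) / (2 * b)) *\<^sub>R t)) \<partial>lborel) < \<infinity>" .
    qed
  qed (use b in auto)
  show "\<And>a. emeasure (laplace_measure b) {..<a} > 0" unfolding laplace_measure_def
    by (rule dens_pos) (use b in \<open>auto simp: lborel_Iio_ne0\<close>)
  show "emeasure (laplace_measure b) {-1..1} > 0" unfolding laplace_measure_def
    by (rule dens_pos) (use b in auto)
qed


theorem mainTheorem7:
  fixes n :: nat and C b \<sigma> :: real and x :: "nat \<Rightarrow> real" and D :: "real measure"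
  assumes "n \<ge> 2" and "C > 0"
    and "x \<in> KSplus n C"
    and "\<forall>i j. i \<le> j \<longrightarrow> j < n \<longrightarrow> x i \<le> x j"
    and "x (n - 1) > x 0"
    and "(b > 0 \<and> D = laplace_measure b) \<or> (\<sigma> > 0 \<and> D = gaussian_measure \<sigma>)"
  shows "(Max ((\<lambda>i. bias n D (piSplus n C) x i) ` {..<n})
            - Min ((\<lambda>i. bias n D (piSplus n C) x i) ` {..<n}))
           \<ge> bias n D (pospart (piS n C)) x 0 - bias n D (pospart (piS n C)) x (n - 1)
       \<and> bias n D (pospart (piS n C)) x 0 - bias n D (pospart (piS n C)) x (n - 1) > 0"
proof -
  from assms(6) consider (lap) "b > 0" "D = laplace_measure b" | (gau) "\<sigma> > 0" "D = gaussian_measure \<sigma>"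
    by blast
  then show ?thesis
  proof cases
    case lap
    show ?thesis unfolding lap(2)
      by (rule generic[OF assms(1-5) laplace_props[OF lap(1)]])
  next
    case gau
    show ?thesis unfolding gau(2)
      by (rule generic[OF assms(1-5) gaussian_props[OF gau(1)]])
  qed
qed

end
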